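(* For every $\alpha$ with $1/2<\alpha<3/4$ and every $(x,y)\in[0,1]^2\setminus\{(0,0)\}$, we have $G_\alpha^n(x,y)\to(2/3,2/3)$ as $n\to\infty$. That is, the fixed point $(2/3,2/3)$ attracts all points of the square except the fixed point $(0,0)$.
   Context: Let $\tau:[0,1]\to[0,1]$ be the symmetric tent map, $\tau(x)=2x$ for $0\le x<1/2$ and $\tau(x)=2-2x$ for $1/2\le x\le 1$. For $0<\alpha<1$ define $G_\alpha:[0,1]^2\to[0,1]^2$ by $G_\alpha(x,y)=(y,\tau(\alpha y+(1-\alpha)x))$. *)

theory Defs
  imports "HOL-Analysis.Analysis"
begin

definition tent :: "real \<Rightarrow> real" where
  "tent x = (if x < 1/2 then 2 * x else 2 - 2 * x)"

definition G :: "real \<Rightarrow> real \<times> real \<Rightarrow> real \<times> real" where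
  "G \<alpha> p = (snd p, tent (\<alpha> * snd p + (1 - \<alpha>) * fst p))"

end

theory Submission
  imports Defs
begin

definition TT :: "real \<Rightarrow> real" where "TT a = (2*a - 1) * (3 - 4*a)"

definition VV :: "real \<Rightarrow> real \<Rightarrow> real \<Rightarrow> real" where
  "VV a x y = ((2-2*a)^2 + TT a / 2) * (x-2/3)^2 + (x-2/3)*(y-2/3) + (y-2/3)^2"

lemma conv_range:
  fixes a x y :: real
  assumes "0 < a" "a < 1" "0 \<le> x" "x \<le> 1" "0 \<le> y" "y \<le> 1"
  shows "0 \<le> a*y + (1-a)*x \<and> a*y + (1-a)*x \<le> 1"
proof -
  have "a*y \<le> a" using assms by (simp add: mult_left_le)
  moreover have "(1-a)*x \<le> 1-a" using assms by (simp add: mult_left_le)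
  moreover have "0 \<le> a*y" "0 \<le> (1-a)*x" using assms by auto
  ultimately show ?thesis by linarith
qed

lemma tent_range: "0 \<le> w \<Longrightarrow> w \<le> 1 \<Longrightarrow> 0 \<le> tent w \<and> tent w \<le> 1"
  by (auto simp: tent_def)

lemma tent_lip: "\<bar>tent u - tent v\<bar> \<le> 2 * \<bar>u - v\<bar>"
  by (auto simp: tent_def abs_if)

lemma VV_ident:
  fixes a x y :: real
  shows "VV a y (2 - 2*(a*y + (1-a)*x)) + TT a / 2 * (x-y)^2 = VV a x y"
  unfolding VV_def TT_def by (simp add: field_simps power2_eq_square; algebra)

lemma VV_step:
  fixes a x y :: real
  assumes "0 \<le> y"
  shows "VV a y (tent (a*y + (1-a)*x)) + TT a / 2 * (x-y)^2 \<le> VV a x y"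
proof -
  define w where "w = a*y + (1-a)*x"
  show ?thesis
  proof (cases "w < 1/2")
    case True
    have "VV a y (2*w) - VV a y (2 - 2*w) = (4*w - 2) * y"
      unfolding VV_def by (simp add: algebra_simps power2_eq_square)
    moreover have "(4*w - 2) * y \<le> 0" using True assms by (simp add: mult_nonpos_nonneg)
    ultimately show ?thesis using VV_ident[of a y x] True
      by (simp add: tent_def w_def[symmetric])
  next
    case False
    then show ?thesis using VV_ident[of a y x] by (simp add: tent_def w_def[symmetric])
  qed
qed


theorem theorem6:
  fixes \<alpha> x y :: real
  assumes "1/2 < \<alpha>" and "\<alpha> < 3/4"
    and "x \<in> {0..1}" and "y \<in> {0..1}" and "(x, y) \<noteq> (0, 0)"
  shows "(\<lambda>n. (G \<alpha> ^^ n) (x, y)) \<longlonglongrightarrow> (2/3, 2/3)"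
proof -
  define s where "s n = (G \<alpha> ^^ n) (x, y)" for n
  define a where "a n = fst (s n)" for n
  define b where "b n = snd (s n)" for n
  have sab: "s n = (a n, b n)" for n by (simp add: a_def b_def)
  have aS: "a (Suc n) = b n" for n by (simp add: a_def b_def s_def G_def)
  have bS: "b (Suc n) = tent (\<alpha> * b n + (1-\<alpha>) * a n)" for n
    by (simp add: a_def b_def s_def G_def)
  have a0: "0 < \<alpha>" "\<alpha> < 1" using assms by auto
  have rng: "0 \<le> a n \<and> a n \<le> 1 \<and> 0 \<le> b n \<and> b n \<le> 1" for n
  proof (induction n)
    case 0 then show ?case using assms by (simp add: a_def b_def s_def)
  next
    case (Suc n)
    then show ?case using aS bS tent_range conv_range[OF a0, of "a n" "b n"] by simp
  qed
  have nz: "(a n, b n) \<noteq> (0, 0)" for n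
  proof (induction n)
    case 0 then show ?case using assms by (simp add: a_def b_def s_def)
  next
    case (Suc n)
    show ?case
    proof
      assume h: "(a (Suc n), b (Suc n)) = (0, 0)"
      then have bn: "b n = 0" using aS by simp
      then have an: "a n > 0" using Suc rng[of n] by force
      have "(1-\<alpha>) * a n > 0" using an a0 by simp
      moreover have "(1-\<alpha>) * a n < 1/2"
      proof -
        have "(1-\<alpha>) * a n \<le> 1 - \<alpha>" using rng[of n] a0 by (simp add: mult_left_le)
        then show ?thesis using assms by linarith
      qed
      ultimately have "b (Suc n) > 0" using bS[of n] bn by (simp add: tent_def)
      then show False using h by simp
    qed
  qed
  define T where "T = TT \<alpha>"
  have Tpos: "T > 0" unfolding T_def TT_def using assms by (simp add: mult_pos_pos)
  define V where "V n = VV \<alpha> (a n) (b n)" for n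
  have Vstep: "V (Suc n) + T/2 * (a n - b n)^2 \<le> V n" for n
    unfolding V_def T_def aS bS using VV_step[of "b n" \<alpha> "a n"] rng[of n] by simp
  have dec: "decseq V"
  proof (rule decseq_SucI)
    fix n
    have "0 \<le> T/2 * (a n - b n)^2" using Tpos by simp
    then show "V (Suc n) \<le> V n" using Vstep[of n] by linarith
  qed
  have Vlow: "\<forall>i. -10 \<le> V i"
  proof
    fix i
    have "\<bar>a i - 2/3\<bar> \<le> 1" "\<bar>b i - 2/3\<bar> \<le> 1" using rng[of i] by auto
    then have "\<bar>(a i - 2/3) * (b i - 2/3)\<bar> \<le> 1"
      by (simp add: abs_mult mult_le_one)
    moreover have "0 \<le> ((2-2*\<alpha>)^2 + TT \<alpha> / 2) * (a i - 2/3)^2"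
      using Tpos T_def by simp
    moreover have "0 \<le> (b i - 2/3)^2" by simp
    ultimately show "-10 \<le> V i" unfolding V_def VV_def by linarith
  qed
  obtain L where VL: "V \<longlonglongrightarrow> L" using decseq_convergent[OF dec Vlow] by blast
  have dV: "(\<lambda>n. V n - V (Suc n)) \<longlonglongrightarrow> 0"
    using tendsto_diff[OF VL LIMSEQ_Suc[OF VL]] by simp
  define d where "d n = b n - a n" for n
  have d0: "d \<longlonglongrightarrow> 0"
  proof (rule Lim_null_comparison)
    show "\<forall>\<^sub>F n in sequentially. norm (d n) \<le> sqrt (2/T * (V n - V (Suc n)))"
    proof (rule always_eventually, rule allI)
      fix n
      have "(d n)^2 \<le> 2/T * (V n - V (Suc n))"
        using Vstep[of n] Tpos unfolding d_def
        by (simp add: field_simps power2_commute)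
      then have "sqrt ((d n)^2) \<le> sqrt (2/T * (V n - V (Suc n)))"
        using real_sqrt_le_mono by blast
      then show "norm (d n) \<le> sqrt (2/T * (V n - V (Suc n)))" by simp
    qed
    show "(\<lambda>n. sqrt (2/T * (V n - V (Suc n)))) \<longlonglongrightarrow> 0"
      using tendsto_real_sqrt[OF tendsto_mult_right_zero[OF dV, of "2/T"]] by simp
  qed
  have blim: "b \<longlonglongrightarrow> 2/3"
  proof (rule LIMSEQ_I)
    fix r :: real assume "0 < r"
    define e where "e = min r (1/9)"
    have e0: "0 < e" "e \<le> r" "e \<le> 1/9" using \<open>0 < r\<close> by (auto simp: e_def)
    obtain N where N: "\<And>n. n \<ge> N \<Longrightarrow> norm (d n) < e/9"
      using LIMSEQ_D[OF d0, of "e/9"] e0 by auto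
    have alt: "b n < e/3 \<or> \<bar>b n - 2/3\<bar> < e/9" if "n \<ge> N" for n
    proof -
      define w where "w = \<alpha> * b n + (1-\<alpha>) * a n"
      have "\<bar>d (Suc n)\<bar> < e/9" using N that by simp
      then have h1: "\<bar>tent w - b n\<bar> < e/9" by (simp add: d_def aS bS w_def)
      have "\<bar>d n\<bar> < e/9" using N that by simp
      moreover have "w - b n = (1-\<alpha>) * (- d n)" by (simp add: w_def d_def algebra_simps)
      ultimately have "\<bar>w - b n\<bar> \<le> \<bar>d n\<bar>" using a0 by (simp add: abs_mult mult_left_le_one_le)
      then have h2: "\<bar>tent w - tent (b n)\<bar> < 2 * (e/9)"
        using tent_lip[of w "b n"] \<open>\<bar>d n\<bar> < e/9\<close> by (smt (verit))
      have "\<bar>tent (b n) - b n\<bar> < e/3" using h1 h2 by linarith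
      then show ?thesis by (auto simp: tent_def abs_if split: if_splits)
    qed
    have "\<bar>b n - 2/3\<bar> < e" if "n \<ge> N" for n
    proof (rule ccontr)
      assume "\<not> \<bar>b n - 2/3\<bar> < e"
      then have bn: "b n < e/3" using alt[OF that] abs_ge_zero[of "b n - 2/3"] by linarith
      have small: "b (n + k) < e/3" for k
      proof (induction k)
        case 0 then show ?case using bn by simp
      next
        case (Suc k)
        have "\<bar>d (Suc (n+k))\<bar> < e/9" using N that by simp
        then have "\<bar>b (Suc (n+k)) - b (n+k)\<bar> < e/9" by (simp add: d_def aS)
        then have "b (Suc (n+k)) < 4*e/9" using Suc by linarith
        then have "\<not> \<bar>b (Suc (n+k)) - 2/3\<bar> < e/9" using e0 by auto
        then show ?case using alt[of "Suc (n+k)"] that by simp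
      qed
      have lowstep: "b (Suc m) = 2 * (\<alpha> * b m + (1-\<alpha>) * a m)" if "m \<ge> Suc n" for m
      proof -
        have "m = n + Suc (m - Suc n)" using that by simp
        then obtain k where mk: "m = n + Suc k" by blast
        have "b m < e/3" using small[of "Suc k"] mk by simp
        moreover have "a m = b (n + k)" using mk aS[of "n+k"] by simp
        then have "a m < e/3" using small[of k] by simp
        moreover have "\<alpha> * b m \<le> b m"
          using a0 rng[of m] mult_left_le_one_le[of "b m" \<alpha>] by simp
        moreover have "(1-\<alpha>) * a m \<le> a m"
          using a0 rng[of m] mult_left_le_one_le[of "a m" "1-\<alpha>"] by simp
        ultimately have "\<alpha> * b m + (1-\<alpha>) * a m < 1/2" using e0 by linarith
        then show ?thesis using bS[of m] by (simp add: tent_def)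
      qed
      define m0 where "m0 = Suc n"
      have "a m0 > 0 \<or> b m0 > 0" using nz[of m0] rng[of m0] by force
      moreover have "0 \<le> \<alpha> * b m0" "0 \<le> (1-\<alpha>) * a m0" using rng[of m0] a0 by auto
      moreover have "b m0 > 0 \<Longrightarrow> \<alpha> * b m0 > 0" using a0 by simp
      moreover have "a m0 > 0 \<Longrightarrow> (1-\<alpha>) * a m0 > 0" using a0 by simp
      ultimately have "\<alpha> * b m0 + (1-\<alpha>) * a m0 > 0" by linarith
      then have cpos: "b (Suc m0) > 0" using lowstep[of m0] by (simp add: m0_def)
      define c where "c = b (Suc m0)"
      have grow: "b (Suc m0 + k) \<ge> (2*\<alpha>)^k * c" for k
      proof (induction k)
        case 0 then show ?case by (simp add: c_def)
      next
        case (Suc k)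
        have "b (Suc (Suc m0 + k)) = 2 * (\<alpha> * b (Suc m0 + k) + (1-\<alpha>) * a (Suc m0 + k))"
          using lowstep[of "Suc m0 + k"] by (simp add: m0_def)
        moreover have "(1-\<alpha>) * a (Suc m0 + k) \<ge> 0" using a0 rng by simp
        moreover have "\<alpha> * b (Suc m0 + k) \<ge> \<alpha> * ((2*\<alpha>)^k * c)"
          using Suc a0 by (simp add: mult_left_mono)
        ultimately show ?case by simp
      qed
      obtain k where k: "1 / c < (2*\<alpha>)^k" using real_arch_pow[of "2*\<alpha>" "1/c"] assms by auto
      moreover have "c > 0" using cpos by (simp add: c_def)
      ultimately have "1 < (2*\<alpha>)^k * c" by (simp add: divide_less_eq)
      then show False using grow[of k] rng[of "Suc m0 + k"] by linarith
    qed
    then show "\<exists>no. \<forall>n\<ge>no. norm (b n - 2/3) < r" using e0 by force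
  qed
  have alim: "a \<longlonglongrightarrow> 2/3"
  proof (rule LIMSEQ_imp_Suc)
    have "(\<lambda>n. a (Suc n)) = b" using aS by (rule ext)
    then show "(\<lambda>n. a (Suc n)) \<longlonglongrightarrow> 2/3" using blim by simp
  qed
  have eq: "(\<lambda>n. (G \<alpha> ^^ n) (x, y)) = (\<lambda>n. (a n, b n))"
    by (rule ext) (simp add: a_def b_def s_def)
  show ?thesis unfolding eq by (rule tendsto_Pair[OF alim blim])
qed

end
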